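(* For every $m\ge3$, the $m$-candidate plurality rule (score vector $(1,0,\dots,0)$) is dominated by some other $m$-candidate positional rule; indeed it is dominated both by the anti-plurality rule (score vector $(1,\dots,1,0)$) and by Borda's rule (score vector $w_i=(m-i)/(m-1)$).
   Context: For an $m$-candidate positional rule with score vector $w=(w_1,\dots,w_m)$, $1=w_1\ge\cdots\ge w_m=0$, let $\bar w=\frac1m\sum_iw_i$, $\sigma_w^2=\frac1m\sum_iw_i^2-\bar w^2$, $M_w=\{(\lambda,\mu):0\le\lambda\le\mu,\ w_{i+1}\lambda+(1-w_i)\mu\le1,\ i=1,\dots,m-1\}$, and $V_w=\sup\{\lambda(\rho_1(Z)-\bar Z)+\mu(\bar Z-\rho_2(Z)):(\lambda,\mu)\in\sigma_w(\frac{m}{m-1})^{1/2}M_w\}\in[0,\infty]$, where $Z=(Z_1,\dots,Z_m)$ has independent standard normal entries, $\bar Z$ is their mean and $\rho_j(Z)$ the $j$-th largest entry. (Under Impartial Culture, $V_w$ is the limiting distribution of the minimum manipulating coalition size divided by $\sqrt n$.) Let $g_w(v)=\mathbb P(V_w\le v)$. A rule $w$ dominates a rule $w'$ if $g_w(v)\le g_{w'}(v)$ for all $v\ge0$. *)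

theory Defs
  imports "HOL-Probability.Probability"
begin

(* Score vectors are indexed 1..m: w :: nat => real, entries w 1, ..., w m. *)

definition positional_rule :: "nat \<Rightarrow> (nat \<Rightarrow> real) \<Rightarrow> bool" where
  "positional_rule m w \<longleftrightarrow> w 1 = 1 \<and> w m = 0 \<and> (\<forall>i\<in>{1..<m}. w (Suc i) \<le> w i)"

definition w_mean :: "nat \<Rightarrow> (nat \<Rightarrow> real) \<Rightarrow> real" where
  "w_mean m w = (\<Sum>i=1..m. w i) / real m"

definition w_sd :: "nat \<Rightarrow> (nat \<Rightarrow> real) \<Rightarrow> real" where
  "w_sd m w = sqrt ((\<Sum>i=1..m. (w i)\<^sup>2) / real m - (w_mean m w)\<^sup>2)"

definition M_set :: "nat \<Rightarrow> (nat \<Rightarrow> real) \<Rightarrow> (real \<times> real) set" where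
  "M_set m w = {(l, u). 0 \<le> l \<and> l \<le> u \<and>
      (\<forall>i\<in>{1..<m}. w (Suc i) * l + (1 - w i) * u \<le> 1)}"

definition scaled_M_set :: "nat \<Rightarrow> (nat \<Rightarrow> real) \<Rightarrow> (real \<times> real) set" where
  "scaled_M_set m w =
     (\<lambda>(l, u). (w_sd m w * sqrt (real m / (real m - 1)) * l,
                w_sd m w * sqrt (real m / (real m - 1)) * u)) ` M_set m w"

definition z_mean :: "nat \<Rightarrow> (nat \<Rightarrow> real) \<Rightarrow> real" where
  "z_mean m Z = (\<Sum>i=1..m. Z i) / real m"

definition order_stat :: "nat \<Rightarrow> (nat \<Rightarrow> real) \<Rightarrow> nat \<Rightarrow> real" where
  "order_stat m Z j = rev (sort (map Z [1..<Suc m])) ! (j - 1)"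

definition V_w :: "nat \<Rightarrow> (nat \<Rightarrow> real) \<Rightarrow> (nat \<Rightarrow> real) \<Rightarrow> ereal" where
  "V_w m w Z = (SUP p \<in> scaled_M_set m w.
      ereal (fst p * (order_stat m Z 1 - z_mean m Z) + snd p * (z_mean m Z - order_stat m Z 2)))"

definition gauss_vec :: "nat \<Rightarrow> (nat \<Rightarrow> real) measure" where
  "gauss_vec m = PiM {1..m} (\<lambda>_. density lborel std_normal_density)"

definition g_w :: "nat \<Rightarrow> (nat \<Rightarrow> real) \<Rightarrow> real \<Rightarrow> real" where
  "g_w m w v = measure (gauss_vec m) {Z \<in> space (gauss_vec m). V_w m w Z \<le> ereal v}"

definition dominates :: "nat \<Rightarrow> (nat \<Rightarrow> real) \<Rightarrow> (nat \<Rightarrow> real) \<Rightarrow> bool" where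
  "dominates m w w' \<longleftrightarrow> (\<forall>v\<ge>0. g_w m w v \<le> g_w m w' v)"

definition plurality :: "nat \<Rightarrow> nat \<Rightarrow> real" where
  "plurality m i = (if i = 1 then 1 else 0)"

definition antiplurality :: "nat \<Rightarrow> nat \<Rightarrow> real" where
  "antiplurality m i = (if i = m then 0 else 1)"

definition borda :: "nat \<Rightarrow> nat \<Rightarrow> real" where
  "borda m i = (real m - real i) / (real m - 1)"

end

theory Submission imports Defs "HOL-Combinatorics.List_Permutation" begin

lemma rev_sorted_ge:
  fixes L :: "real list"
  assumes "i \<le> j" "j < length L"
  shows "rev (sort L) ! j \<le> rev (sort L) ! i"
proof -
  have s: "sorted (sort L)" by simp
  have l: "length (sort L) = length L" by simp
  have "rev (sort L) ! j = sort L ! (length L - Suc j)" using assms by (simp add: rev_nth)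
  moreover have "rev (sort L) ! i = sort L ! (length L - Suc i)" using assms by (simp add: rev_nth)
  moreover have "sort L ! (length L - Suc j) \<le> sort L ! (length L - Suc i)"
    using sorted_nth_mono[OF s, of "length L - Suc j" "length L - Suc i"] assms l by auto
  ultimately show ?thesis by simp
qed

lemma list_perm_bij:
  fixes L :: "real list"
  obtains f where "bij_betw f {..<length L} {..<length L}"
    "\<And>i. i < length L \<Longrightarrow> L ! i = rev (sort L) ! f i"
proof -
  have "mset L = mset (rev (sort L))" by simp
  then obtain f where "bij_betw f {..<length L} {..<length (rev (sort L))}"
     "\<forall>i<length L. L ! i = rev (sort L) ! f i"
    using permutation_Ex_bij by blast
  then show ?thesis using that by simp
qed

lemma list_os1:
  fixes L :: "real list"
  assumes "length L \<ge> 1"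
  shows "rev (sort L) ! 0 = Max ((\<lambda>i. L ! i) ` {..<length L})"
proof -
  obtain f where f: "bij_betw f {..<length L} {..<length L}"
    "\<And>i. i < length L \<Longrightarrow> L ! i = rev (sort L) ! f i" using list_perm_bij[of L] by blast
  have "(\<lambda>i. L ! i) ` {..<length L} = (\<lambda>i. rev (sort L) ! i) ` (f ` {..<length L})"
    using f(2) by (auto simp: image_iff)
  also have "f ` {..<length L} = {..<length L}" using f(1) by (simp add: bij_betw_def)
  finally have e: "(\<lambda>i. L ! i) ` {..<length L} = (\<lambda>i. rev (sort L) ! i) ` {..<length L}" .
  show ?thesis unfolding e
    by (rule Max_eqI[symmetric]) (use assms rev_sorted_ge[of 0] in auto)
qed

lemma list_os2:
  fixes L :: "real list"
  assumes "length L \<ge> 2"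
  shows "rev (sort L) ! 1 = Max ((\<lambda>(i,j). min (L ! i) (L ! j)) ` {(i,j). i < length L \<and> j < length L \<and> i \<noteq> j})"
proof -
  let ?n = "length L" let ?s = "rev (sort L)"
  obtain f where f: "bij_betw f {..<length L} {..<length L}"
    "\<And>i. i < length L \<Longrightarrow> L ! i = rev (sort L) ! f i" using list_perm_bij[of L] by blast
  have fi: "inj_on f {..<?n}" and fs: "f ` {..<?n} = {..<?n}" using f(1) by (auto simp: bij_betw_def)
  have e: "(\<lambda>(i,j). min (L ! i) (L ! j)) ` {(i,j). i < ?n \<and> j < ?n \<and> i \<noteq> j}
      = (\<lambda>(i,j). min (?s ! i) (?s ! j)) ` {(i,j). i < ?n \<and> j < ?n \<and> i \<noteq> j}"
  proof
    show "(\<lambda>(i,j). min (L ! i) (L ! j)) ` {(i,j). i < ?n \<and> j < ?n \<and> i \<noteq> j}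
      \<subseteq> (\<lambda>(i,j). min (?s ! i) (?s ! j)) ` {(i,j). i < ?n \<and> j < ?n \<and> i \<noteq> j}"
    proof clarsimp
      fix i j assume ij: "i < ?n" "j < ?n" "i \<noteq> j"
      have "f i < ?n" "f j < ?n" using ij fs by auto
      moreover have "f i \<noteq> f j" using ij fi by (auto dest: inj_onD)
      ultimately show "min (L ! i) (L ! j) \<in> (\<lambda>(i,j). min (?s ! i) (?s ! j)) ` {(i,j). i < ?n \<and> j < ?n \<and> i \<noteq> j}"
        using f(2) ij by (intro rev_image_eqI[of "(f i, f j)"]) auto
    qed
    show "(\<lambda>(i,j). min (?s ! i) (?s ! j)) ` {(i,j). i < ?n \<and> j < ?n \<and> i \<noteq> j}
      \<subseteq> (\<lambda>(i,j). min (L ! i) (L ! j)) ` {(i,j). i < ?n \<and> j < ?n \<and> i \<noteq> j}"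
    proof clarsimp
      fix i j assume ij: "i < ?n" "j < ?n" "i \<noteq> j"
      obtain a where a: "a < ?n" "f a = i" using ij fs by (metis imageE lessThan_iff)
      obtain b where b: "b < ?n" "f b = j" using ij fs by (metis imageE lessThan_iff)
      have "a \<noteq> b" using a b ij by auto
      then show "min (?s ! i) (?s ! j) \<in> (\<lambda>(i,j). min (L ! i) (L ! j)) ` {(i,j). i < ?n \<and> j < ?n \<and> i \<noteq> j}"
        using f(2) a b by (intro rev_image_eqI[of "(a, b)"]) auto
    qed
  qed
  have fin: "finite {(i,j). i < ?n \<and> j < ?n \<and> i \<noteq> j}"
    by (rule finite_subset[of _ "{..<?n} \<times> {..<?n}"]) auto
  show ?thesis unfolding e
  proof (rule Max_eqI[symmetric])
    show "finite ((\<lambda>(i,j). min (?s ! i) (?s ! j)) ` {(i,j). i < ?n \<and> j < ?n \<and> i \<noteq> j})"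
      using fin by simp
  next
    fix y assume "y \<in> (\<lambda>(i,j). min (?s ! i) (?s ! j)) ` {(i,j). i < ?n \<and> j < ?n \<and> i \<noteq> j}"
    then obtain i j where ij: "i < ?n" "j < ?n" "i \<noteq> j" "y = min (?s ! i) (?s ! j)" by auto
    show "y \<le> ?s ! 1"
    proof (cases "i < j")
      case True
      then have "?s ! j \<le> ?s ! 1" using ij rev_sorted_ge[of 1 j L] by auto
      then show ?thesis using ij by linarith
    next
      case False
      then have "?s ! i \<le> ?s ! 1" using ij rev_sorted_ge[of 1 i L] by auto
      then show ?thesis using ij by linarith
    qed
  next
    have "?s ! 1 \<le> ?s ! 0" using rev_sorted_ge[of 0 1 L] assms by auto
    then have "?s ! 1 = min (?s ! 0) (?s ! 1)" by simp
    then show "?s ! 1 \<in> (\<lambda>(i,j). min (?s ! i) (?s ! j)) ` {(i,j). i < ?n \<and> j < ?n \<and> i \<noteq> j}"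
      using assms by (intro rev_image_eqI[of "(0, 1)"]) auto
  qed
qed


lemma nth_mapZ: "i < m \<Longrightarrow> map Z [1..<Suc m] ! i = Z (Suc i)"
  by (simp del: upt_Suc)

lemma os1_eq:
  assumes "m \<ge> 2"
  shows "order_stat m Z 1 = Max ((\<lambda>i. Z (Suc i)) ` {..<m})"
proof -
  have "order_stat m Z 1 = rev (sort (map Z [1..<Suc m])) ! 0" by (simp add: order_stat_def)
  also have "\<dots> = Max ((\<lambda>i. map Z [1..<Suc m] ! i) ` {..<m})"
    using list_os1[of "map Z [1..<Suc m]"] assms by simp
  also have "(\<lambda>i. map Z [1..<Suc m] ! i) ` {..<m} = (\<lambda>i. Z (Suc i)) ` {..<m}"
    by (rule image_cong) (auto simp: nth_mapZ simp del: upt_Suc)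
  finally show ?thesis .
qed

lemma os2_eq:
  assumes "m \<ge> 2"
  shows "order_stat m Z 2 = Max ((\<lambda>p. min (Z (Suc (fst p))) (Z (Suc (snd p)))) ` {(i,j). i < m \<and> j < m \<and> i \<noteq> j})"
proof -
  have "order_stat m Z 2 = rev (sort (map Z [1..<Suc m])) ! 1" by (simp add: order_stat_def)
  also have "\<dots> = Max ((\<lambda>(i,j). min (map Z [1..<Suc m] ! i) (map Z [1..<Suc m] ! j)) ` {(i,j). i < m \<and> j < m \<and> i \<noteq> j})"
    using list_os2[of "map Z [1..<Suc m]"] assms by simp
  also have "(\<lambda>(i,j). min (map Z [1..<Suc m] ! i) (map Z [1..<Suc m] ! j)) ` {(i,j). i < m \<and> j < m \<and> i \<noteq> j}
     = (\<lambda>p. min (Z (Suc (fst p))) (Z (Suc (snd p)))) ` {(i,j). i < m \<and> j < m \<and> i \<noteq> j}"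
    by (rule image_cong) (auto simp: nth_mapZ simp del: upt_Suc)
  finally show ?thesis .
qed

lemma comp_meas: "(\<lambda>Z. Z i) \<in> borel_measurable (gauss_vec m)" if "i \<in> {1..m}"
proof -
  have "(\<lambda>Z. Z i) \<in> measurable (gauss_vec m) (density lborel std_normal_density)"
    unfolding gauss_vec_def using that by (rule measurable_component_singleton)
  then show ?thesis by (simp add: measurable_def)
qed

lemma os1_meas: "m \<ge> 2 \<Longrightarrow> (\<lambda>Z. order_stat m Z 1) \<in> borel_measurable (gauss_vec m)"
  unfolding os1_eq
  by (rule borel_measurable_Max) (auto intro!: comp_meas)

lemma os2_meas: "m \<ge> 2 \<Longrightarrow> (\<lambda>Z. order_stat m Z 2) \<in> borel_measurable (gauss_vec m)"
  unfolding os2_eq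
proof (rule borel_measurable_Max)
  show "finite {(i,j). i < m \<and> j < m \<and> i \<noteq> j}"
    by (rule finite_subset[of _ "{..<m} \<times> {..<m}"]) auto
next
  fix p assume "p \<in> {(i,j). i < m \<and> j < m \<and> i \<noteq> j}"
  then have "Suc (fst p) \<in> {1..m}" "Suc (snd p) \<in> {1..m}" by auto
  then show "(\<lambda>x. min (x (Suc (fst p))) (x (Suc (snd p)))) \<in> borel_measurable (gauss_vec m)"
    using comp_meas by measurable
qed

lemma mean_meas: "(\<lambda>Z. z_mean m Z) \<in> borel_measurable (gauss_vec m)"
  unfolding z_mean_def
proof -
  have "(\<lambda>Z. \<Sum>i=1..m. Z i) \<in> borel_measurable (gauss_vec m)"
    by (rule borel_measurable_sum) (rule comp_meas)
  then show "(\<lambda>Z. (\<Sum>i=1..m. Z i) / real m) \<in> borel_measurable (gauss_vec m)"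
    by simp
qed

lemma gauss_prob: "prob_space (gauss_vec m)"
  unfolding gauss_vec_def by (intro prob_space_PiM prob_space_normal_density) simp


lemma M_pl: assumes "m \<ge> 3"
  shows "M_set m (plurality m) = {(l, u). 0 \<le> l \<and> l \<le> u \<and> u \<le> 1}"
proof -
  have two: "2 \<in> {1..<m}" using assms by auto
  have "(\<forall>i\<in>{1..<m}. plurality m (Suc i) * l + (1 - plurality m i) * u \<le> 1) \<longleftrightarrow> u \<le> 1"
    for l u :: real
  proof
    assume "\<forall>i\<in>{1..<m}. plurality m (Suc i) * l + (1 - plurality m i) * u \<le> 1"
    from this[rule_format, OF two] show "u \<le> 1" by (simp add: plurality_def)
  next
    assume "u \<le> 1"
    then show "\<forall>i\<in>{1..<m}. plurality m (Suc i) * l + (1 - plurality m i) * u \<le> 1"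
      by (auto simp: plurality_def)
  qed
  then show ?thesis unfolding M_set_def by auto
qed

definition cpl :: "nat \<Rightarrow> real" where
  "cpl m = w_sd m (plurality m) * sqrt (real m / (real m - 1))"

lemma scaled_pl: assumes "m \<ge> 3"
  shows "scaled_M_set m (plurality m) = (\<lambda>(l, u). (cpl m * l, cpl m * u)) ` {(l, u). 0 \<le> l \<and> l \<le> u \<and> u \<le> 1}"
  unfolding scaled_M_set_def M_pl[OF assms] cpl_def by simp


lemma V_pl_le:
  assumes "m \<ge> 3"
  shows "V_w m (plurality m) Z \<le> ereal v \<longleftrightarrow>
    (0 \<le> v \<and> cpl m * (z_mean m Z - order_stat m Z 2) \<le> v \<and>
     cpl m * ((order_stat m Z 1 - z_mean m Z) + (z_mean m Z - order_stat m Z 2)) \<le> v)"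
    (is "_ \<longleftrightarrow> ?R")
proof -
  define a where "a = order_stat m Z 1 - z_mean m Z"
  define b where "b = z_mean m Z - order_stat m Z 2"
  define c where "c = cpl m"
  have "V_w m (plurality m) Z \<le> ereal v \<longleftrightarrow>
      (\<forall>l u. 0 \<le> l \<and> l \<le> u \<and> u \<le> 1 \<longrightarrow> c * l * a + c * u * b \<le> v)"
    unfolding V_w_def scaled_pl[OF assms] SUP_le_iff a_def b_def c_def by auto
  also have "\<dots> \<longleftrightarrow> (0 \<le> v \<and> c * b \<le> v \<and> c * (a + b) \<le> v)"
  proof
    assume H: "\<forall>l u. 0 \<le> l \<and> l \<le> u \<and> u \<le> 1 \<longrightarrow> c * l * a + c * u * b \<le> v"
    show "0 \<le> v \<and> c * b \<le> v \<and> c * (a + b) \<le> v"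
      using H[rule_format, of 0 0] H[rule_format, of 0 1] H[rule_format, of 1 1]
      by (simp add: algebra_simps)
  next
    assume R: "0 \<le> v \<and> c * b \<le> v \<and> c * (a + b) \<le> v"
    show "\<forall>l u. 0 \<le> l \<and> l \<le> u \<and> u \<le> 1 \<longrightarrow> c * l * a + c * u * b \<le> v"
    proof (intro allI impI)
      fix l u :: real assume lu: "0 \<le> l \<and> l \<le> u \<and> u \<le> 1"
      have e: "c * l * a + c * u * b = l * (c * (a + b)) + (u - l) * (c * b)"
        by (simp add: algebra_simps)
      have 1: "l * (c * (a + b)) \<le> l * v" using lu R by (intro mult_left_mono) auto
      have 2: "(u - l) * (c * b) \<le> (u - l) * v" using lu R by (intro mult_left_mono) auto
      have 3: "u * v \<le> v" using lu R mult_right_mono[of u 1 v] by simp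
      show "c * l * a + c * u * b \<le> v" unfolding e using 1 2 3 by (simp add: algebra_simps)
    qed
  qed
  finally show ?thesis unfolding a_def b_def c_def .
qed

lemma V_pl_meas:
  assumes "m \<ge> 3"
  shows "{Z \<in> space (gauss_vec m). V_w m (plurality m) Z \<le> ereal v} \<in> sets (gauss_vec m)"
proof -
  have m2: "m \<ge> 2" using assms by simp
  note [measurable] = os1_meas[OF m2] os2_meas[OF m2] mean_meas
  have "{Z \<in> space (gauss_vec m). V_w m (plurality m) Z \<le> ereal v} =
    {Z \<in> space (gauss_vec m). (0 \<le> v \<and> cpl m * (z_mean m Z - order_stat m Z 2) \<le> v \<and>
     cpl m * ((order_stat m Z 1 - z_mean m Z) + (z_mean m Z - order_stat m Z 2)) \<le> v)}"
    using V_pl_le[OF assms] by auto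
  also have "\<dots> \<in> sets (gauss_vec m)" by measurable
  finally show ?thesis .
qed

lemma dom_of_subset:
  assumes "m \<ge> 3" "scaled_M_set m (plurality m) \<subseteq> scaled_M_set m w"
  shows "dominates m w (plurality m)"
  unfolding dominates_def
proof (intro allI impI)
  fix v :: real assume "v \<ge> 0"
  interpret prob_space "gauss_vec m" by (rule gauss_prob)
  have le: "V_w m (plurality m) Z \<le> V_w m w Z" for Z
    unfolding V_w_def by (rule SUP_subset_mono[OF assms(2)]) simp
  have "{Z \<in> space (gauss_vec m). V_w m w Z \<le> ereal v} \<subseteq> {Z \<in> space (gauss_vec m). V_w m (plurality m) Z \<le> ereal v}"
    using le order_trans by blast
  then show "g_w m w v \<le> g_w m (plurality m) v"
    unfolding g_w_def by (rule finite_measure_mono[OF _ V_pl_meas[OF assms(1)]])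
qed


lemma sum_pl: "m \<ge> 1 \<Longrightarrow> (\<Sum>i=1..m. plurality m i) = 1"
  unfolding plurality_def by simp

lemma sum_pl2: "m \<ge> 1 \<Longrightarrow> (\<Sum>i=1..m. (plurality m i)\<^sup>2) = 1"
proof -
  have "(plurality m i)\<^sup>2 = plurality m i" for i by (simp add: plurality_def)
  then show "m \<ge> 1 \<Longrightarrow> ?thesis" using sum_pl by simp
qed

lemma sum_ap: assumes "m \<ge> 1" shows "(\<Sum>i=1..m. antiplurality m i) = real m - 1"
proof -
  have e: "{1..m} = insert m {1..<m}" using assms by auto
  have "(\<Sum>i=1..m. antiplurality m i) = (\<Sum>i\<in>{1..<m}. antiplurality m i)"
    unfolding e by (simp add: antiplurality_def)
  also have "\<dots> = (\<Sum>i\<in>{1..<m}. 1)" by (rule sum.cong) (auto simp: antiplurality_def)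
  finally show ?thesis using assms by simp
qed

lemma sum_ap2: assumes "m \<ge> 1" shows "(\<Sum>i=1..m. (antiplurality m i)\<^sup>2) = real m - 1"
proof -
  have "(antiplurality m i)\<^sup>2 = antiplurality m i" for i by (simp add: antiplurality_def)
  then show ?thesis using sum_ap[OF assms] by simp
qed

lemma sd_eq: assumes "m \<ge> 3" shows "w_sd m (antiplurality m) = w_sd m (plurality m)"
proof -
  have m: "real m \<ge> 3" using assms by simp
  have m1: "m \<ge> 1" using assms by simp
  have "(\<Sum>i=1..m. (antiplurality m i)\<^sup>2) / real m - (w_mean m (antiplurality m))\<^sup>2
      = (real m - 1) / (real m)^2"
    unfolding w_mean_def sum_ap[OF m1] sum_ap2[OF m1] using m assms
    by (simp add: field_simps power2_eq_square)
  moreover have "(\<Sum>i=1..m. (plurality m i)\<^sup>2) / real m - (w_mean m (plurality m))\<^sup>2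
      = (real m - 1) / (real m)^2"
    unfolding w_mean_def sum_pl[OF m1] sum_pl2[OF m1] using m assms
    by (simp add: field_simps power2_eq_square)
  ultimately show ?thesis unfolding w_sd_def by simp
qed

lemma dom_ap: assumes "m \<ge> 3" shows "dominates m (antiplurality m) (plurality m)"
proof (rule dom_of_subset[OF assms])
  have "M_set m (plurality m) \<subseteq> M_set m (antiplurality m)"
  proof
    fix p assume "p \<in> M_set m (plurality m)"
    then obtain l u where p: "p = (l, u)" "0 \<le> l" "l \<le> u" "u \<le> 1" using M_pl[OF assms] by auto
    have "antiplurality m (Suc i) * l + (1 - antiplurality m i) * u \<le> 1" if "i \<in> {1..<m}" for i
      using that p by (auto simp: antiplurality_def)
    then show "p \<in> M_set m (antiplurality m)" unfolding M_set_def using p by auto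
  qed
  then show "scaled_M_set m (plurality m) \<subseteq> scaled_M_set m (antiplurality m)"
    unfolding scaled_M_set_def sd_eq[OF assms] by (rule image_mono)
qed


lemma gs1: "(\<Sum>i=1..k. real i) = real k * (real k + 1) / 2"
  by (induction k) (simp_all add: field_simps)

lemma gs2: "(\<Sum>i=1..k. (real i)\<^sup>2) = real k * (real k + 1) * (2 * real k + 1) / 6"
  by (induction k) (simp_all add: field_simps power2_eq_square)

lemma borda_var: assumes "m \<ge> 3"
  shows "(\<Sum>i=1..m. (borda m i)\<^sup>2) / real m - (w_mean m (borda m))\<^sup>2 = (real m + 1) / (12 * (real m - 1))"
proof -
  define n where "n = real m"
  have n: "n \<ge> 3" using assms n_def by simp
  have s1: "(\<Sum>i=1..m. borda m i) = (n * n - n * (n + 1) / 2) / (n - 1)"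
    unfolding borda_def sum_divide_distrib[symmetric] sum_subtractf gs1 n_def by simp
  have "(\<Sum>i=1..m. (borda m i)\<^sup>2) = (\<Sum>i=1..m. (n\<^sup>2 - 2 * n * real i + (real i)\<^sup>2) / (n - 1)\<^sup>2)"
    unfolding borda_def n_def by (rule sum.cong) (simp_all add: power_divide power2_diff)
  also have "\<dots> = (n * n\<^sup>2 - 2 * n * (n * (n + 1) / 2) + n * (n + 1) * (2 * n + 1) / 6) / (n - 1)\<^sup>2"
    unfolding sum_divide_distrib[symmetric] sum.distrib sum_subtractf sum_distrib_left[symmetric] gs1 gs2 n_def
    by simp
  finally have s2: "(\<Sum>i=1..m. (borda m i)\<^sup>2) = (n * n\<^sup>2 - 2 * n * (n * (n + 1) / 2) + n * (n + 1) * (2 * n + 1) / 6) / (n - 1)\<^sup>2" .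
  have "n - 1 \<noteq> 0" "n \<noteq> 0" using n by auto
  then have h1: "(n * n - n * (n + 1) / 2) / (n - 1) / n = 1 / 2"
    by (simp add: field_simps)
  have e2: "n * n\<^sup>2 - 2 * n * (n * (n + 1) / 2) + n * (n + 1) * (2 * n + 1) / 6 = n * (2 * n - 1) * (n - 1) / 6"
    by (simp add: field_simps power2_eq_square)
  have h2: "(n * n\<^sup>2 - 2 * n * (n * (n + 1) / 2) + n * (n + 1) * (2 * n + 1) / 6) / (n - 1)\<^sup>2 / n
     = (2 * n - 1) / (6 * (n - 1))"
  proof -
    have "(n - 1)\<^sup>2 = (n - 1) * (n - 1)" by (simp add: power2_eq_square)
    then have "n * (2 * n - 1) * (n - 1) / 6 / (n - 1)\<^sup>2 / n = (n * (n - 1)) * (2 * n - 1) / ((n * (n - 1)) * (6 * (n - 1)))"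
      by (simp only: divide_divide_eq_left) (simp add: algebra_simps)
    also have "\<dots> = (2 * n - 1) / (6 * (n - 1))"
      using \<open>n - 1 \<noteq> 0\<close> \<open>n \<noteq> 0\<close> by (rule_tac mult_divide_mult_cancel_left) simp
    finally show ?thesis unfolding e2 .
  qed
  have "(2 * n - 1) / (6 * (n - 1)) - (1/2)\<^sup>2 = (n + 1) / (12 * (n - 1))"
    using \<open>n - 1 \<noteq> 0\<close> by (simp add: field_simps power2_eq_square)
  then show ?thesis unfolding w_mean_def s1 s2 n_def[symmetric] h1 h2 .
qed


lemma poly_ineq: fixes n :: real assumes "n \<ge> 3" shows "(n - 2)\<^sup>2 / n \<le> n * (n + 1) / 12"
proof -
  define t where "t = n - 3"
  have t: "t \<ge> 0" using assms t_def by simp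
  have "0 \<le> t * ((t - 1)\<^sup>2 + 8)" using t by simp
  then have "12 * (n - 2)\<^sup>2 \<le> n * (n * (n + 1))"
    unfolding t_def by (simp add: algebra_simps power2_eq_square)
  then show ?thesis using assms by (simp add: field_simps)
qed

lemma dom_borda: assumes "m \<ge> 3" shows "dominates m (borda m) (plurality m)"
proof (rule dom_of_subset[OF assms])
  define n where "n = real m"
  have n: "n \<ge> 3" using assms n_def by simp
  have m1: "m \<ge> 1" using assms by simp
  define cb where "cb = w_sd m (borda m) * sqrt (real m / (real m - 1))"
  have vpl: "(\<Sum>i=1..m. (plurality m i)\<^sup>2) / real m - (w_mean m (plurality m))\<^sup>2
      = (real m - 1) / (real m)^2"
    unfolding w_mean_def sum_pl[OF m1] sum_pl2[OF m1] using assms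
    by (simp add: field_simps power2_eq_square)
  have "cpl m = sqrt ((n - 1) / n^2) * sqrt (n / (n - 1))"
    unfolding cpl_def w_sd_def vpl n_def ..
  also have "\<dots> = sqrt ((n - 1) / n^2 * (n / (n - 1)))"
    by (simp only: real_sqrt_mult)
  also have "(n - 1) / n^2 * (n / (n - 1)) = 1 / n" using n by (simp add: field_simps power2_eq_square)
  finally have cpl: "cpl m = sqrt (1 / n)" .
  have cb: "cb = sqrt ((n + 1) / (12 * (n - 1)) * (n / (n - 1)))"
    unfolding cb_def w_sd_def borda_var[OF assms] n_def by (simp only: real_sqrt_mult)
  have cb_pos: "cb > 0" unfolding cb using n by simp
  have cpl_nn: "cpl m \<ge> 0" unfolding cpl using n by simp
  have key: "(n - 2) * cpl m \<le> (n - 1) * cb"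
  proof -
    have "(n - 2) * cpl m = sqrt ((n - 2)\<^sup>2 * (1 / n))"
      unfolding cpl real_sqrt_mult real_sqrt_abs using n by simp
    also have "\<dots> \<le> sqrt ((n - 1)\<^sup>2 * ((n + 1) / (12 * (n - 1)) * (n / (n - 1))))"
    proof (rule real_sqrt_le_mono)
      have "(n - 1)\<^sup>2 * ((n + 1) / (12 * (n - 1)) * (n / (n - 1))) = ((n - 1) * (n - 1)) * (n * (n + 1)) / (((n - 1) * (n - 1)) * 12)"
        by (simp add: power2_eq_square algebra_simps)
      also have "\<dots> = n * (n + 1) / 12"
        using n by (intro mult_divide_mult_cancel_left) simp
      finally have eq: "(n - 1)\<^sup>2 * ((n + 1) / (12 * (n - 1)) * (n / (n - 1))) = n * (n + 1) / 12" .
      show "(n - 2)\<^sup>2 * (1 / n) \<le> (n - 1)\<^sup>2 * ((n + 1) / (12 * (n - 1)) * (n / (n - 1)))"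
        unfolding eq using poly_ineq[OF n] by simp
    qed
    also have "\<dots> = (n - 1) * cb"
      unfolding cb real_sqrt_mult[of "(n-1)\<^sup>2"] real_sqrt_abs using n by simp
    finally show ?thesis .
  qed
  define k where "k = cpl m / cb"
  have k0: "k \<ge> 0" unfolding k_def using cpl_nn cb_pos by simp
  have kb: "(n - 2) * k \<le> n - 1" unfolding k_def using key cb_pos
    by (simp add: field_simps)
  show "scaled_M_set m (plurality m) \<subseteq> scaled_M_set m (borda m)"
  proof
    fix p assume "p \<in> scaled_M_set m (plurality m)"
    then obtain l u where lu: "p = (cpl m * l, cpl m * u)" "0 \<le> l" "l \<le> u" "u \<le> 1"
      unfolding scaled_pl[OF assms] by auto
    have mem: "(k * l, k * u) \<in> M_set m (borda m)"
    proof -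
      have c1: "0 \<le> k * l" using k0 lu by simp
      have c2: "k * l \<le> k * u" using k0 lu by (simp add: mult_left_mono)
      have c3: "borda m (Suc i) * (k * l) + (1 - borda m i) * (k * u) \<le> 1" if i: "i \<in> {1..<m}" for i
      proof -
      have bs: "borda m (Suc i) \<ge> 0" using i n unfolding borda_def n_def by auto
      have 1: "borda m (Suc i) * (k * l) \<le> borda m (Suc i) * (k * u)"
        using bs k0 lu by (intro mult_left_mono) (auto simp: mult_left_mono)
      have 2: "borda m (Suc i) + (1 - borda m i) = (n - 2) / (n - 1)"
      proof -
        have nz: "n - 1 \<noteq> 0" using n by simp
        have a: "borda m (Suc i) = (n - real i - 1) / (n - 1)" by (simp add: borda_def n_def)
        have b: "borda m i = (n - real i) / (n - 1)" by (simp add: borda_def n_def)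
        have c: "(n - real i - 1) / (n - 1) + (1 - (n - real i) / (n - 1))
             = ((n - real i - 1) + (n - 1) - (n - real i)) / (n - 1)"
        proof -
          have o: "1 = (n - 1) / (n - 1)" using nz by simp
          show ?thesis
            by (subst o) (simp only: add_divide_distrib[symmetric] diff_divide_distrib[symmetric] add_diff_eq)
        qed
        have d: "(n - real i - 1) + (n - 1) - (n - real i) = n - 2" by simp
        show ?thesis unfolding a b c d ..
      qed
      have 3: "(n - 2) / (n - 1) * (k * u) \<le> (n - 2) / (n - 1) * k"
        using n k0 lu by (intro mult_left_mono) (auto simp: mult_left_le)
      have 4: "(n - 2) / (n - 1) * k \<le> 1" using kb n by (simp add: field_simps)
      have "borda m (Suc i) * (k * l) + (1 - borda m i) * (k * u) \<le> (borda m (Suc i) + (1 - borda m i)) * (k * u)"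
        using 1 by (simp add: algebra_simps)
      also have "\<dots> \<le> 1" unfolding 2 using 3 4 by linarith
      finally show "borda m (Suc i) * (k * l) + (1 - borda m i) * (k * u) \<le> 1" .
      qed
      show ?thesis unfolding M_set_def using c1 c2 c3 by blast
    qed
    have "p = (cb * (k * l), cb * (k * u))" unfolding lu k_def using cb_pos by simp
    then show "p \<in> scaled_M_set m (borda m)"
      unfolding scaled_M_set_def cb_def[symmetric] using mem by (auto intro!: rev_image_eqI[of "(k*l, k*u)"])
  qed
qed

theorem proposition12:
  fixes m :: nat
  assumes "m \<ge> 3"
  shows "(\<exists>w. positional_rule m w \<and> (\<exists>i\<in>{1..m}. w i \<noteq> plurality m i)
              \<and> dominates m w (plurality m))
         \<and> dominates m (antiplurality m) (plurality m)
         \<and> dominates m (borda m) (plurality m)"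
proof (intro conjI)
  show "dominates m (antiplurality m) (plurality m)" by (rule dom_ap[OF assms])
  show "dominates m (borda m) (plurality m)" by (rule dom_borda[OF assms])
  have pr: "positional_rule m (antiplurality m)"
    unfolding positional_rule_def antiplurality_def using assms by auto
  have "2 \<in> {1..m}" "antiplurality m 2 \<noteq> plurality m 2"
    using assms by (auto simp: antiplurality_def plurality_def)
  then show "\<exists>w. positional_rule m w \<and> (\<exists>i\<in>{1..m}. w i \<noteq> plurality m i) \<and> dominates m w (plurality m)"
    using pr dom_ap[OF assms] by blast
qed

end
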